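(* Let $H$ be an $\{m,m-1\}$-graph with clique number $\omega$, and let $\rho(H)$ be the spectral radius of its adjacency tensor. Then $$\omega\leq m-2+\big[(m-1)!\,\rho(H)\big]^{\frac{1}{m-1}}.$$
   Context: A general hypergraph $H=(V,E)$ has vertex set $V=[n]$ and edges that are subsets of $V$; it is an $\{m,m-1\}$-graph if the set of edge cardinalities $\{|e|:e\in E\}$ equals $\{m,m-1\}$, so its rank (maximum edge size) is $m$. A clique is a vertex set $W$ such that every subset of $W$ of cardinality $m$ or $m-1$ is an edge of $H$; the clique number $\omega$ is the maximum size of a clique (by convention $\omega=1$ if $E$ is empty). For $s\le m$ put $\alpha(s)=\sum_{k_1,\dots,k_s\ge1,\ k_1+\cdots+k_s=m}\frac{m!}{k_1!\cdots k_s!}$. The adjacency tensor $\mathcal A=(a_{i_1\cdots i_m})$ is the order-$m$, dimension-$n$ tensor with $a_{i_1\cdots i_m}=s/\alpha(s)$ whenever $\{i_1,\dots,i_m\}=e$ for some edge $e$ with $|e|=s$, and $0$ otherwise. $\lambda\in\mathbb C$ is an eigenvalue if there is nonzero $x\in\mathbb C^n$ with $\sum_{i_2,\dots,i_m}a_{ii_2\cdots i_m}x_{i_2}\cdots x_{i_m}=\lambda x_i^{m-1}$ for all $i$; $\rho(H)$ is the maximum modulus of the eigenvalues. *)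

theory Defs
  imports Complex_Main
begin

definition hypergraph :: "nat \<Rightarrow> nat set set \<Rightarrow> bool" where
  "hypergraph n E \<longleftrightarrow> (\<forall>e\<in>E. e \<noteq> {} \<and> e \<subseteq> {1..n})"

definition mm1_graph :: "nat \<Rightarrow> nat set set \<Rightarrow> bool" where
  "mm1_graph m E \<longleftrightarrow> card ` E = {m, m - 1}"

definition is_clique :: "nat \<Rightarrow> nat set set \<Rightarrow> nat \<Rightarrow> nat set \<Rightarrow> bool" where
  "is_clique n E m W \<longleftrightarrow> W \<subseteq> {1..n} \<and>
     (\<forall>S. S \<subseteq> W \<and> (card S = m \<or> card S = m - 1) \<longrightarrow> S \<in> E)"

definition clique_number :: "nat \<Rightarrow> nat set set \<Rightarrow> nat \<Rightarrow> nat" where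
  "clique_number n E m = (if E = {} then 1 else Max (card ` {W. is_clique n E m W}))"

definition alpha :: "nat \<Rightarrow> nat \<Rightarrow> real" where
  "alpha m s = (\<Sum>ks\<in>{ks. length ks = s \<and> set ks \<subseteq> {1..m} \<and> sum_list ks = m}.
                  fact m / (\<Prod>k\<leftarrow>ks. fact k))"

text \<open>Adjacency tensor entry a_{i_1...i_m}, index tuple given as a list of length m.\<close>
definition adj_tensor :: "nat set set \<Rightarrow> nat \<Rightarrow> nat list \<Rightarrow> real" where
  "adj_tensor E m is = (if \<exists>e\<in>E. set is = e
      then real (card (set is)) / alpha m (card (set is)) else 0)"

definition tuples :: "nat \<Rightarrow> nat \<Rightarrow> nat list set" where
  "tuples n k = {xs. length xs = k \<and> set xs \<subseteq> {1..n}}"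

definition tensor_eigenvalue :: "nat \<Rightarrow> nat set set \<Rightarrow> nat \<Rightarrow> complex \<Rightarrow> bool" where
  "tensor_eigenvalue n E m lam \<longleftrightarrow> (\<exists>x :: nat \<Rightarrow> complex. (\<exists>i\<in>{1..n}. x i \<noteq> 0) \<and>
     (\<forall>i\<in>{1..n}. (\<Sum>xs\<in>tuples n (m - 1). of_real (adj_tensor E m (i # xs)) * (\<Prod>j\<leftarrow>xs. x j))
                  = lam * x i ^ (m - 1)))"

definition spectral_radius_H :: "nat \<Rightarrow> nat set set \<Rightarrow> nat \<Rightarrow> real" where
  "spectral_radius_H n E m = Sup {cmod lam | lam. tensor_eigenvalue n E m lam}"

end

theory Submission imports Defs "HOL-Analysis.Analysis" begin

lemma sum_list_ge_length:
  fixes ks :: "nat list"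
  assumes "\<forall>k\<in>set ks. 1 \<le> k"
  shows "length ks \<le> sum_list ks"
  using assms by (induction ks) auto

lemma sum_list_eq_length_ones:
  fixes ks :: "nat list"
  assumes "\<forall>k\<in>set ks. 1 \<le> k" "sum_list ks = length ks"
  shows "ks = replicate (length ks) 1"
  using assms
proof (induction ks)
  case Nil then show ?case by simp
next
  case (Cons a ks)
  have "length ks \<le> sum_list ks" using Cons.prems(1) sum_list_ge_length by simp
  with Cons.prems have "a = 1" "sum_list ks = length ks" by auto
  with Cons show ?case by simp
qed

lemma sum_list_eq_length_plus_one:
  fixes ks :: "nat list"
  assumes "\<forall>k\<in>set ks. 1 \<le> k" "sum_list ks = length ks + 1"
  shows "\<exists>j<length ks. ks = replicate j 1 @ 2 # replicate (length ks - j - 1) 1"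
  using assms
proof (induction ks)
  case Nil then show ?case by simp
next
  case (Cons a ks)
  have ge: "length ks \<le> sum_list ks" using Cons.prems(1) sum_list_ge_length by simp
  show ?case
  proof (cases "a = 1")
    case True
    then have "sum_list ks = length ks + 1" using Cons.prems by simp
    then obtain j where j: "j < length ks" "ks = replicate j 1 @ 2 # replicate (length ks - j - 1) 1"
      using Cons.IH Cons.prems by auto
    show ?thesis
      by (rule exI[of _ "Suc j"]) (use j True in auto)
  next
    case False
    with Cons.prems ge have "a = 2" "sum_list ks = length ks" by auto
    then have "ks = replicate (length ks) 1" using sum_list_eq_length_ones Cons.prems by auto
    then show ?thesis using \<open>a = 2\<close> by (intro exI[of _ 0]) auto
  qed
qed

lemma alpha_m:
  shows "alpha m m = fact m"
proof -
  have "{ks. length ks = m \<and> set ks \<subseteq> {1..m} \<and> sum_list ks = m} = {replicate m (1::nat)}"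
  proof (intro equalityI subsetI)
    fix ks assume "ks \<in> {ks. length ks = m \<and> set ks \<subseteq> {1..m} \<and> sum_list ks = m}"
    then have "length ks = m" "\<forall>k\<in>set ks. 1 \<le> k" "sum_list ks = length ks" by auto
    then show "ks \<in> {replicate m 1}" using sum_list_eq_length_ones by auto
  next
    fix ks assume "ks \<in> {replicate m (1::nat)}"
    then show "ks \<in> {ks. length ks = m \<and> set ks \<subseteq> {1..m} \<and> sum_list ks = m}"
      by (cases "m = 0") (auto simp: sum_list_replicate)
  qed
  then show ?thesis unfolding alpha_def by simp
qed

lemma alpha_m1:
  assumes "m \<ge> 2"
  shows "alpha m (m - 1) = real (m - 1) * fact m / 2"
proof -
  define L where "L = (\<lambda>j. replicate j (1::nat) @ 2 # replicate (m - 2 - j) 1)"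
  have "{ks. length ks = m - 1 \<and> set ks \<subseteq> {1..m} \<and> sum_list ks = m} = L ` {..<m - 1}"
  proof (intro equalityI subsetI)
    fix ks assume "ks \<in> {ks. length ks = m - 1 \<and> set ks \<subseteq> {1..m} \<and> sum_list ks = m}"
    then have h: "length ks = m - 1" "\<forall>k\<in>set ks. 1 \<le> k" "sum_list ks = length ks + 1"
      using assms by auto
    then obtain j where "j < length ks" "ks = replicate j 1 @ 2 # replicate (length ks - j - 1) 1"
      using sum_list_eq_length_plus_one by blast
    then show "ks \<in> L ` {..<m - 1}" using h(1) unfolding L_def
      by (intro image_eqI[of _ _ j]) auto
  next
    fix ks assume "ks \<in> L ` {..<m - 1}"
    then obtain j where j: "j < m - 1" "ks = L j" by auto
    then show "ks \<in> {ks. length ks = m - 1 \<and> set ks \<subseteq> {1..m} \<and> sum_list ks = m}"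
      using assms unfolding L_def by (auto simp: sum_list_replicate)
  qed
  moreover have "inj_on L {..<m - 1}"
  proof (rule inj_onI)
    fix j k assume "j \<in> {..<m - 1}" "k \<in> {..<m - 1}" "L j = L k"
    then have "L j ! j = L k ! j" "L j ! k = L k ! k" by simp_all
    then show "j = k" using \<open>j \<in> {..<m - 1}\<close> \<open>k \<in> {..<m - 1}\<close> unfolding L_def
      by (cases "j < k") (auto simp: nth_append nth_Cons' split: if_splits)
  qed
  moreover have "(\<Prod>k\<leftarrow>L j. fact k) = (2 :: real)" for j
    unfolding L_def by simp
  ultimately show ?thesis unfolding alpha_def
    by (simp add: sum.reindex del: One_nat_def)
qed


definition Bv :: "nat \<Rightarrow> nat set set \<Rightarrow> nat \<Rightarrow> (nat \<Rightarrow> real) \<Rightarrow> nat \<Rightarrow> real" where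
  "Bv n E m x i = (\<Sum>xs\<in>tuples n (m - 1). adj_tensor E m (i # xs) * prod_list (map x xs))"
definition Fv :: "nat \<Rightarrow> nat set set \<Rightarrow> nat \<Rightarrow> (nat \<Rightarrow> real) \<Rightarrow> real" where
  "Fv n E m x = (\<Sum>t\<in>tuples n m. adj_tensor E m t * prod_list (map x t))"
definition Nv :: "nat \<Rightarrow> nat \<Rightarrow> (nat \<Rightarrow> real) \<Rightarrow> real" where
  "Nv n m x = (\<Sum>i\<in>{1..n}. x i ^ m)"

lemma finite_tuples[simp]: "finite (tuples n k)"
proof -
  have "tuples n k = {xs. set xs \<subseteq> {1..n} \<and> length xs = k}" unfolding tuples_def by auto
  then show ?thesis using finite_lists_length_eq[of "{1..n}" k] by simp
qed

lemma alpha_nonneg: "alpha m s \<ge> 0"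
  unfolding alpha_def by (intro sum_nonneg divide_nonneg_nonneg prod_list_nonneg) auto

lemma adj_nonneg: "adj_tensor E m t \<ge> 0"
  unfolding adj_tensor_def using alpha_nonneg by auto

lemma adj_set: "set s = set t \<Longrightarrow> adj_tensor E m s = adj_tensor E m t"
  unfolding adj_tensor_def by simp

lemma adj_edge: "set t \<in> E \<Longrightarrow> adj_tensor E m t = real (card (set t)) / alpha m (card (set t))"
  unfolding adj_tensor_def by auto

lemma tuples_Suc: "tuples n (Suc k) = (\<lambda>(i, xs). i # xs) ` ({1..n} \<times> tuples n k)"
  unfolding tuples_def by (auto simp: length_Suc_conv image_iff)

lemma Fv_Bv:
  assumes "m \<ge> 1"
  shows "Fv n E m x = (\<Sum>i\<in>{1..n}. x i * Bv n E m x i)"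
proof -
  obtain k where k: "m = Suc k" using assms by (cases m) auto
  have inj: "inj_on (\<lambda>(i, xs). i # xs) ({1..n} \<times> tuples n k)" by (auto simp: inj_on_def)
  have "Fv n E m x = (\<Sum>p\<in>{1..n} \<times> tuples n k. adj_tensor E m (fst p # snd p) * prod_list (map x (fst p # snd p)))"
    unfolding Fv_def k tuples_Suc by (subst sum.reindex[OF inj]) (simp add: case_prod_beta)
  also have "\<dots> = (\<Sum>i\<in>{1..n}. \<Sum>xs\<in>tuples n k. adj_tensor E m (i # xs) * (x i * prod_list (map x xs)))"
    unfolding sum.cartesian_product by (simp add: case_prod_beta)
  also have "\<dots> = (\<Sum>i\<in>{1..n}. x i * Bv n E m x i)"
    unfolding Bv_def k by (simp add: sum_distrib_left mult_ac)
  finally show ?thesis .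
qed

lemma Bv_nonneg: "(\<And>j. j \<in> {1..n} \<Longrightarrow> x j \<ge> 0) \<Longrightarrow> Bv n E m x i \<ge> 0"
  unfolding Bv_def tuples_def
  by (intro sum_nonneg mult_nonneg_nonneg adj_nonneg prod_list_nonneg) auto

lemma prod_list_map_cong: "(\<And>j. j \<in> set t \<Longrightarrow> f j = g j) \<Longrightarrow> prod_list (map f t) = prod_list (map g t)"
  by (metis map_eq_conv)

lemma prod_list_scale: "prod_list (map (\<lambda>j. f j / (c::real)) t) = prod_list (map f t) / c ^ length t"
  by (induction t) auto

lemma continuous_prod_list: "continuous_on UNIV (\<lambda>x::nat \<Rightarrow> real. prod_list (map x t))"
  by (induction t) (auto intro!: continuous_intros)


definition ins_at :: "nat \<Rightarrow> nat \<Rightarrow> nat list \<Rightarrow> nat list" where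
  "ins_at k i xs = take k xs @ i # drop k xs"

lemma ins_at_nth:
  assumes "k \<le> length xs" "l < length xs"
  shows "ins_at k i xs ! (if l < k then l else Suc l) = xs ! l"
  using assms unfolding ins_at_def by (auto simp: nth_append min_def Suc_diff_le)

lemma ins_at_take_drop:
  assumes "k \<le> length xs"
  shows "take k (ins_at k i xs) = take k xs" "drop (Suc k) (ins_at k i xs) = drop k xs"
  using assms unfolding ins_at_def by (auto simp: min_def)

lemma prod_ins_at:
  assumes "length xs = m - 1" "k < m"
  shows "(\<Prod>l\<in>{0..<m}-{k}. f (ins_at k i xs ! l)) = prod_list (map f xs)"
proof -
  define h where "h = (\<lambda>l::nat. if l < k then l else Suc l)"
  have bij: "bij_betw h {0..<m-1} ({0..<m}-{k})"
  proof (rule bij_betw_imageI)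
    show "inj_on h {0..<m - 1}" unfolding h_def by (auto simp: inj_on_def split: if_splits)
    show "h ` {0..<m - 1} = {0..<m} - {k}"
    proof (intro equalityI subsetI)
      fix y assume "y \<in> h ` {0..<m - 1}" then show "y \<in> {0..<m} - {k}"
        using assms unfolding h_def by (auto split: if_splits)
    next
      fix y assume y: "y \<in> {0..<m} - {k}"
      show "y \<in> h ` {0..<m - 1}"
      proof (cases "y < k")
        case True then show ?thesis using y assms unfolding h_def by (auto intro!: image_eqI[of _ _ y])
      next
        case False then have "y = h (y - 1)" "y - 1 \<in> {0..<m-1}" using y unfolding h_def by auto
        then show ?thesis by blast
      qed
    qed
  qed
  have "(\<Prod>l\<in>{0..<m}-{k}. f (ins_at k i xs ! l)) = (\<Prod>l\<in>{0..<m-1}. f (ins_at k i xs ! h l))"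
    using prod.reindex_bij_betw[OF bij, of "\<lambda>l. f (ins_at k i xs ! l)"] by simp
  also have "\<dots> = (\<Prod>l\<in>{0..<m-1}. f (xs ! l))"
  proof (intro prod.cong refl)
    fix l assume "l \<in> {0..<m-1}"
    then show "f (ins_at k i xs ! h l) = f (xs ! l)"
      using ins_at_nth[of k xs l i] assms unfolding h_def by auto
  qed
  also have "\<dots> = prod_list (map f xs)"
    by (subst prod.list_conv_set_nth) (use assms in simp)
  finally show ?thesis .
qed

lemma count_pos:
  assumes "k < m" "i \<in> {1..n}"
  shows "(\<Sum>t\<in>tuples n m. adj_tensor E m t * ((if t ! k = i then 1 else 0) * (\<Prod>l\<in>{0..<m}-{k}. x (t ! l))))
         = Bv n E m x i"
proof -
  have "(\<Sum>t\<in>tuples n m. adj_tensor E m t * ((if t ! k = i then 1 else 0) * (\<Prod>l\<in>{0..<m}-{k}. x (t ! l))))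
      = (\<Sum>t\<in>tuples n m. if t ! k = i then adj_tensor E m t * (\<Prod>l\<in>{0..<m}-{k}. x (t ! l)) else 0)"
    by (intro sum.cong) auto
  also have "\<dots> = (\<Sum>t\<in>{t\<in>tuples n m. t ! k = i}. adj_tensor E m t * (\<Prod>l\<in>{0..<m}-{k}. x (t ! l)))"
    by (rule sum.inter_filter[symmetric]) simp
  also have "{t\<in>tuples n m. t ! k = i} = ins_at k i ` tuples n (m - 1)"
  proof (intro equalityI subsetI)
    fix t assume t: "t \<in> {t\<in>tuples n m. t ! k = i}"
    then have "length t = m" "set t \<subseteq> {1..n}" "t ! k = i" unfolding tuples_def by auto
    then have "t = ins_at k i (take k t @ drop (Suc k) t)"
      unfolding ins_at_def using assms id_take_nth_drop[of k t] by (simp add: min_def)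
    moreover have "take k t @ drop (Suc k) t \<in> tuples n (m - 1)"
      unfolding tuples_def using \<open>length t = m\<close> \<open>set t \<subseteq> {1..n}\<close> assms
      by (auto dest: in_set_takeD in_set_dropD)
    ultimately show "t \<in> ins_at k i ` tuples n (m - 1)" by blast
  next
    fix t assume "t \<in> ins_at k i ` tuples n (m - 1)"
    then obtain xs where xs: "xs \<in> tuples n (m - 1)" "t = ins_at k i xs" by auto
    then show "t \<in> {t\<in>tuples n m. t ! k = i}"
      unfolding tuples_def ins_at_def using assms
      by (auto simp: nth_append min_def dest: in_set_takeD in_set_dropD)
  qed
  also have "inj_on (ins_at k i) (tuples n (m - 1))"
  proof (rule inj_onI)
    fix xs ys assume h: "xs \<in> tuples n (m - 1)" "ys \<in> tuples n (m - 1)" "ins_at k i xs = ins_at k i ys"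
    then have len: "length xs = m - 1" "length ys = m - 1" unfolding tuples_def by auto
    have "take k (ins_at k i xs) = take k (ins_at k i ys)" "drop (Suc k) (ins_at k i xs) = drop (Suc k) (ins_at k i ys)"
      using h(3) by simp_all
    then have "take k xs = take k ys" "drop k xs = drop k ys"
      using len assms ins_at_take_drop[of k xs i] ins_at_take_drop[of k ys i] by auto
    then show "xs = ys" by (metis append_take_drop_id)
  qed
  then have "(\<Sum>t\<in>ins_at k i ` tuples n (m - 1). adj_tensor E m t * (\<Prod>l\<in>{0..<m}-{k}. x (t ! l)))
      = (\<Sum>xs\<in>tuples n (m - 1). adj_tensor E m (ins_at k i xs) * (\<Prod>l\<in>{0..<m}-{k}. x (ins_at k i xs ! l)))"
    by (simp add: sum.reindex)
  also have "\<dots> = Bv n E m x i"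
    unfolding Bv_def
  proof (intro sum.cong refl)
    fix xs assume "xs \<in> tuples n (m - 1)"
    then have "length xs = m - 1" unfolding tuples_def by auto
    moreover have "set (ins_at k i xs) = set (i # xs)"
      unfolding ins_at_def by (metis append_take_drop_id set_append set_simps(2) Un_insert_right insert_is_Un sup_commute)
    ultimately show "adj_tensor E m (ins_at k i xs) * (\<Prod>l\<in>{0..<m}-{k}. x (ins_at k i xs ! l))
        = adj_tensor E m (i # xs) * prod_list (map x xs)"
      using prod_ins_at[of xs m k x i] assms adj_set by auto
  qed
  finally show ?thesis .
qed

lemma Fv_deriv:
  assumes "i \<in> {1..n}"
  shows "((\<lambda>s. Fv n E m (\<lambda>j. x j + s * (if j = i then 1 else 0))) has_real_derivative (real m * Bv n E m x i)) (at 0)"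
proof -
  define e where "e = (\<lambda>j. if j = i then 1 else (0::real))"
  have eq: "Fv n E m (\<lambda>j. x j + s * e j) =
      (\<Sum>t\<in>tuples n m. adj_tensor E m t * (\<Prod>l\<in>{0..<m}. x (t ! l) + s * e (t ! l)))" for s
    unfolding Fv_def
  proof (intro sum.cong refl)
    fix t assume "t \<in> tuples n m"
    then have "length t = m" unfolding tuples_def by auto
    then show "adj_tensor E m t * prod_list (map (\<lambda>j. x j + s * e j) t) =
        adj_tensor E m t * (\<Prod>l\<in>{0..<m}. x (t ! l) + s * e (t ! l))"
      by (subst prod.list_conv_set_nth) simp
  qed
  have d: "((\<lambda>s. \<Sum>t\<in>tuples n m. adj_tensor E m t * (\<Prod>l\<in>{0..<m}. x (t ! l) + s * e (t ! l)))
     has_real_derivative (\<Sum>t\<in>tuples n m. adj_tensor E m t *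
        (\<Sum>k\<in>{0..<m}. e (t ! k) * (\<Prod>l\<in>{0..<m}-{k}. x (t ! l) + 0 * e (t ! l))))) (at 0)"
    by (intro DERIV_sum DERIV_cmult has_field_derivative_prod)
       (auto intro!: derivative_eq_intros)
  have "(\<Sum>t\<in>tuples n m. adj_tensor E m t *
        (\<Sum>k\<in>{0..<m}. e (t ! k) * (\<Prod>l\<in>{0..<m}-{k}. x (t ! l) + 0 * e (t ! l))))
      = (\<Sum>k\<in>{0..<m}. \<Sum>t\<in>tuples n m. adj_tensor E m t * ((if t ! k = i then 1 else 0) * (\<Prod>l\<in>{0..<m}-{k}. x (t ! l))))"
    by (subst sum.swap) (simp add: sum_distrib_left e_def)
  also have "\<dots> = (\<Sum>k\<in>{0..<m}. Bv n E m x i)"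
    using count_pos assms by (intro sum.cong refl) auto
  also have "\<dots> = real m * Bv n E m x i" by simp
  finally have deq: "(\<Sum>t\<in>tuples n m. adj_tensor E m t *
        (\<Sum>k\<in>{0..<m}. e (t ! k) * (\<Prod>l\<in>{0..<m}-{k}. x (t ! l) + 0 * e (t ! l))))
      = real m * Bv n E m x i" .
  have "((\<lambda>s. Fv n E m (\<lambda>j. x j + s * e j)) has_real_derivative (real m * Bv n E m x i)) (at 0)"
    using d unfolding deq eq .
  then show ?thesis unfolding e_def .
qed


definition Simp :: "nat \<Rightarrow> (nat \<Rightarrow> real) set" where
  "Simp n = PiE UNIV (\<lambda>j. if j \<in> {1..n} then {0..1} else {0}) \<inter> {x. (\<Sum>j\<in>{1..n}. x j) = 1}"

lemma compact_Simp: "compact (Simp n)"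
proof -
  have "compactin (product_topology (\<lambda>i. euclidean) UNIV)
          (PiE UNIV (\<lambda>j. if j \<in> {1..n} then {0..1::real} else {0}))"
    by (subst compactin_PiE) auto
  then have "compact (PiE UNIV (\<lambda>j. if j \<in> {1..n} then {0..1::real} else {0}))"
    by (simp add: euclidean_product_topology)
  moreover have "closed {x::nat\<Rightarrow>real. (\<Sum>j\<in>{1..n}. x j) = 1}"
    by (intro closed_Collect_eq continuous_on_sum continuous_on_const) simp
  ultimately show ?thesis unfolding Simp_def by auto
qed

lemma Simp_iff: "x \<in> Simp n \<longleftrightarrow> (\<forall>j. if j \<in> {1..n} then 0 \<le> x j \<and> x j \<le> 1 else x j = 0) \<and> (\<Sum>j\<in>{1..n}. x j) = 1"
  unfolding Simp_def by (auto simp: PiE_iff split: if_splits)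

lemma continuous_Fv: "continuous_on S (Fv n E m)"
  unfolding Fv_def
  by (intro continuous_on_sum continuous_on_mult continuous_on_const continuous_on_subset[OF continuous_prod_list]) auto

lemma continuous_Nv: "continuous_on S (Nv n m)"
  unfolding Nv_def by (intro continuous_intros continuous_on_subset[OF continuous_on_product_coordinates]) auto

lemma Nv_pos:
  assumes "\<forall>j\<in>{1..n}. y j \<ge> 0" "j \<in> {1..n}" "y j > 0"
  shows "Nv n m y > 0"
proof -
  have "0 < y j ^ m" using assms by simp
  also have "\<dots> \<le> Nv n m y" unfolding Nv_def
    using assms by (intro member_le_sum) auto
  finally show ?thesis .
qed


lemma Fv_zero:
  assumes "m \<ge> 1" "\<forall>j\<in>{1..n}. y j = 0"
  shows "Fv n E m y = 0"
  unfolding Fv_def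
proof (intro sum.neutral ballI)
  fix t assume t: "t \<in> tuples n m"
  then have "t \<noteq> []" "set t \<subseteq> {1..n}" using assms unfolding tuples_def by auto
  then have "0 \<in> set (map y t)" using assms by (cases t) auto
  then show "adj_tensor E m t * prod_list (map y t) = 0" by (simp add: prod_list_zero_iff)
qed

lemma Fv_scale:
  shows "Fv n E m (\<lambda>j. if j \<in> {1..n} then y j / c else 0) = Fv n E m y / c ^ m"
  unfolding Fv_def sum_divide_distrib
proof (intro sum.cong refl)
  fix t assume t: "t \<in> tuples n m"
  then have "set t \<subseteq> {1..n}" "length t = m" unfolding tuples_def by auto
  then have "prod_list (map (\<lambda>j. if j \<in> {1..n} then y j / c else 0) t) = prod_list (map (\<lambda>j. y j / c) t)"
    by (intro prod_list_map_cong) auto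
  then show "adj_tensor E m t * prod_list (map (\<lambda>j. if j \<in> {1..n} then y j / c else 0) t) =
         adj_tensor E m t * prod_list (map y t) / c ^ m"
    using \<open>length t = m\<close> by (simp add: prod_list_scale)
qed

lemma Nv_scale:
  shows "Nv n m (\<lambda>j. if j \<in> {1..n} then y j / c else 0) = Nv n m y / c ^ m"
  unfolding Nv_def sum_divide_distrib by (intro sum.cong refl) (simp add: power_divide)

lemma exists_eig:
  assumes "m \<ge> 2" "n \<ge> 1"
  shows "\<exists>x \<mu>. (\<forall>i\<in>{1..n}. x i \<ge> 0) \<and> (\<exists>i\<in>{1..n}. x i \<noteq> 0) \<and>
     (\<forall>i\<in>{1..n}. Bv n E m x i = \<mu> * x i ^ (m - 1)) \<and>
     (\<forall>y. (\<forall>i\<in>{1..n}. y i \<ge> 0) \<longrightarrow> Fv n E m y \<le> \<mu> * Nv n m y)"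
proof -
  define R where "R = (\<lambda>x. Fv n E m x / Nv n m x)"
  have Npos: "Nv n m x > 0" if "x \<in> Simp n" for x
  proof -
    have s: "(\<Sum>j\<in>{1..n}. x j) = 1" and nn: "\<forall>j\<in>{1..n}. x j \<ge> 0" using that unfolding Simp_iff by auto
    then obtain j where "j \<in> {1..n}" "x j \<noteq> 0" by (metis sum.neutral zero_neq_one)
    then show ?thesis using Nv_pos[of n x j m] nn by force
  qed
  have cont: "continuous_on (Simp n) R"
    unfolding R_def using Npos
    by (intro continuous_on_divide continuous_Fv continuous_Nv) force
  have ne: "(\<lambda>j. if j = 1 then 1 else 0) \<in> Simp n"
    using assms unfolding Simp_iff by (auto simp: sum.delta)
  obtain x0 where x0: "x0 \<in> Simp n" and max: "\<And>y. y \<in> Simp n \<Longrightarrow> R y \<le> R x0"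
    using continuous_attains_sup[OF compact_Simp _ cont] ne by blast
  define \<mu> where "\<mu> = R x0"
  have x0nn: "\<forall>j\<in>{1..n}. x0 j \<ge> 0" and x0s: "(\<Sum>j\<in>{1..n}. x0 j) = 1"
    using x0 unfolding Simp_iff by auto
  have hom: "Fv n E m y \<le> \<mu> * Nv n m y" if y: "\<forall>i\<in>{1..n}. y i \<ge> 0" for y
  proof (cases "\<forall>j\<in>{1..n}. y j = 0")
    case True
    then have "Fv n E m y = 0" "Nv n m y = 0" using Fv_zero assms unfolding Nv_def by auto
    then show ?thesis by simp
  next
    case False
    then obtain j where j: "j \<in> {1..n}" "y j > 0" using y by force
    define c where "c = (\<Sum>j\<in>{1..n}. y j)"
    have "y j \<le> c" unfolding c_def using j y by (intro member_le_sum) auto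
    then have cpos: "c > 0" using j by simp
    define z where "z = (\<lambda>j. if j \<in> {1..n} then y j / c else 0)"
    have "z \<in> Simp n" unfolding Simp_iff
    proof (intro conjI allI)
      fix i show "if i \<in> {1..n} then 0 \<le> z i \<and> z i \<le> 1 else z i = 0"
      proof (cases "i \<in> {1..n}")
        case True
        have "y i \<le> c" unfolding c_def using True y by (intro member_le_sum) auto
        then show ?thesis using True y cpos unfolding z_def by auto
      next
        case False
        then have "z i = 0" unfolding z_def by auto
        with False show ?thesis by (simp only: if_False)
      qed
    next
      have "(\<Sum>j\<in>{1..n}. z j) = (\<Sum>j\<in>{1..n}. y j / c)" unfolding z_def by simp
      also have "\<dots> = 1" unfolding sum_divide_distrib[symmetric] c_def[symmetric] using cpos by simp
      finally show "(\<Sum>j\<in>{1..n}. z j) = 1" .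
    qed
    then have "R z \<le> \<mu>" using max unfolding \<mu>_def by blast
    moreover have "R z = R y" unfolding R_def z_def Fv_scale Nv_scale using cpos by simp
    moreover have "Nv n m y > 0" using Nv_pos[of n y j m] y j by auto
    ultimately show ?thesis unfolding R_def by (simp add: divide_le_eq mult.commute)
  qed
  have F0: "Fv n E m x0 = \<mu> * Nv n m x0" unfolding \<mu>_def R_def using Npos[OF x0] by simp
  have eig: "Bv n E m x0 i = \<mu> * x0 i ^ (m - 1)" if i: "i \<in> {1..n}" for i
  proof -
    define e where "e = (\<lambda>j. if j = i then 1 else (0::real))"
    define g where "g = (\<lambda>s. \<mu> * Nv n m (\<lambda>j. x0 j + s * e j) - Fv n E m (\<lambda>j. x0 j + s * e j))"
    have gnn: "g s \<ge> 0" if "s \<ge> - x0 i" for s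
    proof -
      have "\<forall>j\<in>{1..n}. x0 j + s * e j \<ge> 0" using that x0nn unfolding e_def by auto
      then show ?thesis using hom unfolding g_def by force
    qed
    have g0: "g 0 = 0" unfolding g_def using F0 by simp
    have dN: "((\<lambda>s. Nv n m (\<lambda>j. x0 j + s * e j)) has_real_derivative
          (\<Sum>j\<in>{1..n}. real m * (x0 j + 0 * e j) ^ (m - 1) * e j)) (at 0)"
      unfolding Nv_def by (intro DERIV_sum) (auto intro!: derivative_eq_intros)
    have "(\<Sum>j\<in>{1..n}. real m * (x0 j + 0 * e j) ^ (m - 1) * e j) = real m * x0 i ^ (m - 1)"
      unfolding e_def using i by (simp add: sum.delta' if_distrib cong: if_cong)
    then have dN': "((\<lambda>s. Nv n m (\<lambda>j. x0 j + s * e j)) has_real_derivative real m * x0 i ^ (m - 1)) (at 0)"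
      using dN by simp
    have dg: "(g has_real_derivative (\<mu> * (real m * x0 i ^ (m - 1)) - real m * Bv n E m x0 i)) (at 0)"
      unfolding g_def e_def
      by (intro DERIV_diff DERIV_cmult Fv_deriv i dN'[unfolded e_def])
    show ?thesis
    proof (cases "x0 i > 0")
      case True
      have "\<forall>y. \<bar>0 - y\<bar> < x0 i \<longrightarrow> g 0 \<le> g y" using gnn g0 by auto
      then have "\<mu> * (real m * x0 i ^ (m - 1)) - real m * Bv n E m x0 i = 0"
        using DERIV_local_min[OF dg True] by blast
      then show ?thesis using assms by (simp add: algebra_simps)
    next
      case False
      then have xi0: "x0 i = 0" using x0nn i by force
      have "\<not> (\<mu> * (real m * x0 i ^ (m - 1)) - real m * Bv n E m x0 i < 0)"
      proof
        assume "\<mu> * (real m * x0 i ^ (m - 1)) - real m * Bv n E m x0 i < 0"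
        from DERIV_neg_dec_right[OF dg this] obtain d where "d > 0" "\<forall>h>0. h < d \<longrightarrow> g (0 + h) < g 0" by blast
        then have "g (d / 2) < 0" using g0 by auto
        moreover have "g (d / 2) \<ge> 0" using gnn xi0 \<open>d > 0\<close> by auto
        ultimately show False by simp
      qed
      moreover have "Bv n E m x0 i \<ge> 0" using Bv_nonneg x0nn by blast
      ultimately have "Bv n E m x0 i = 0" using xi0 assms
        by (simp add: power_0_left) (metis mult_pos_pos of_nat_0_less_iff order_less_le
             zero_less_numeral order_less_le_trans)
      then show ?thesis using xi0 assms by (simp add: power_0_left)
    qed
  qed
  have "\<exists>i\<in>{1..n}. x0 i \<noteq> 0" using x0s by (metis sum.neutral zero_neq_one)
  then show ?thesis using x0nn eig hom by blast
qed


lemma prod_list_ones: "(\<And>j. j \<in> set xs \<Longrightarrow> f j = (1::real)) \<Longrightarrow> prod_list (map f xs) = 1"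
  by (induction xs) auto

lemma card_D:
  assumes "finite W" "card W = w" "w \<ge> m - 1" "m \<ge> 2"
  shows "card {xs. length xs = m - 1 \<and> distinct xs \<and> set xs \<subseteq> W} = \<Prod>{w + 2 - m..w - 1} * w"
proof -
  obtain w' where w': "w = Suc w'" using assms by (cases w) auto
  have "card {xs. length xs = m - 1 \<and> distinct xs \<and> set xs \<subseteq> W} = \<Prod>{w - (m - 1) + 1..w}"
    using card_lists_distinct_length_eq[of W "m - 1"] assms by simp
  also have "w - (m - 1) + 1 = w + 2 - m" using assms by simp
  also have "\<Prod>{w + 2 - m..w} = w * \<Prod>{w + 2 - m..w'}"
    unfolding w' using assms by (subst prod.nat_ivl_Suc') auto
  finally show ?thesis using w' by simp
qed

lemma card_T1:
  assumes "finite W" "card W = w" "w \<ge> m - 1" "m \<ge> 2" "i \<in> W"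
  shows "card {xs. length xs = m - 1 \<and> distinct xs \<and> set xs \<subseteq> W - {i}} = (w + 1 - m) * \<Prod>{w + 2 - m..w - 1}"
proof (cases "w \<ge> m")
  case True
  obtain w' where w': "w = Suc w'" using assms by (cases w) auto
  have cW: "card (W - {i}) = w'" using assms w' by simp
  have "card {xs. length xs = m - 1 \<and> distinct xs \<and> set xs \<subseteq> W - {i}} = \<Prod>{w' - (m - 1) + 1..w'}"
    using card_lists_distinct_length_eq[of "W - {i}" "m - 1"] assms True cW w' by simp
  also have "w' - (m - 1) + 1 = w + 1 - m" using assms True w' by simp
  also have "\<Prod>{w + 1 - m..w'} = (w + 1 - m) * \<Prod>{Suc (w + 1 - m)..w'}"
    using assms True w' by (subst prod.atLeast_Suc_atMost) auto
  also have "Suc (w + 1 - m) = w + 2 - m" using True by simp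
  finally show ?thesis using w' by simp
next
  case False
  then have w: "w = m - 1" using assms by simp
  have e: "{xs. length xs = m - 1 \<and> distinct xs \<and> set xs \<subseteq> W - {i}} = {}"
  proof (rule ccontr)
    assume "{xs. length xs = m - 1 \<and> distinct xs \<and> set xs \<subseteq> W - {i}} \<noteq> {}"
    then obtain xs where xs: "length xs = m - 1" "distinct xs" "set xs \<subseteq> W - {i}" by auto
    then have "card (set xs) \<le> card (W - {i})" using assms by (intro card_mono) auto
    then show False using xs distinct_card[of xs] assms w by simp
  qed
  show ?thesis unfolding e using w assms by simp
qed

lemma Q_bound:
  assumes "w \<ge> m - 1" "m \<ge> 2"
  shows "(w + 2 - m) ^ (m - 2) \<le> \<Prod>{w + 2 - m..w - 1}"
proof -
  have "(w + 2 - m) ^ (m - 2) = (\<Prod>j\<in>{w + 2 - m..w - 1}. w + 2 - m)"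
    using assms by simp
  also have "\<dots> \<le> \<Prod>{w + 2 - m..w - 1}"
    by (intro prod_mono) auto
  finally show ?thesis .
qed

lemma vertex_bound:
  assumes "m \<ge> 2" "is_clique n E m W" "card W = w" "w \<ge> m - 1" "i \<in> W"
  shows "Bv n E m (\<lambda>j. if j \<in> W then 1 else 0) i \<ge> real (w + 2 - m) ^ (m - 1) / fact (m - 1)"
proof -
  define y where "y = (\<lambda>j. if j \<in> W then 1 else (0::real))"
  have Wn: "W \<subseteq> {1..n}" and cl: "\<And>S. S \<subseteq> W \<Longrightarrow> card S = m \<or> card S = m - 1 \<Longrightarrow> S \<in> E"
    using assms unfolding is_clique_def by auto
  have fW: "finite W" using Wn finite_subset by blast
  define D where "D = {xs. length xs = m - 1 \<and> distinct xs \<and> set xs \<subseteq> W}"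
  define T where "T = {xs. length xs = m - 1 \<and> distinct xs \<and> set xs \<subseteq> W - {i}}"
  define Q where "Q = \<Prod>{w + 2 - m..w - 1}"
  have cD: "card D = Q * w" unfolding D_def Q_def using card_D[OF fW assms(3,4,1)] .
  have cT: "card T = (w + 1 - m) * Q" unfolding T_def Q_def using card_T1[OF fW assms(3,4,1,5)] .
  have TD: "T \<subseteq> D" unfolding T_def D_def by auto
  have fD: "finite D" unfolding D_def
    by (rule finite_subset[OF _ finite_lists_length_eq[OF fW, of "m - 1"]]) auto
  have cDT: "card (D - T) = Q * (m - 1)"
  proof -
    have "card (D - T) = Q * w - (w + 1 - m) * Q" using card_Diff_subset[OF finite_subset[OF TD fD] TD] cD cT by simp
    also have "\<dots> = Q * (w - (w + 1 - m))" by (simp add: diff_mult_distrib2 mult.commute)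
    also have "w - (w + 1 - m) = m - 1" using assms by simp
    finally show ?thesis .
  qed
  have Dtup: "D \<subseteq> tuples n (m - 1)" unfolding D_def tuples_def using Wn by auto
  have "(\<Sum>xs\<in>D. adj_tensor E m (i # xs) * prod_list (map y xs)) \<le> Bv n E m y i"
    unfolding Bv_def
    by (intro sum_mono2 Dtup finite_tuples mult_nonneg_nonneg adj_nonneg prod_list_nonneg) (auto simp: y_def)
  moreover have "(\<Sum>xs\<in>D. adj_tensor E m (i # xs) * prod_list (map y xs)) =
      (\<Sum>xs\<in>D - T. adj_tensor E m (i # xs) * prod_list (map y xs)) + (\<Sum>xs\<in>T. adj_tensor E m (i # xs) * prod_list (map y xs))"
    by (rule sum.subset_diff[OF TD fD])
  moreover have "(\<Sum>xs\<in>T. adj_tensor E m (i # xs) * prod_list (map y xs)) = (\<Sum>xs\<in>T. 1 / fact (m - 1))"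
  proof (intro sum.cong refl)
    fix xs assume xs: "xs \<in> T"
    then have h: "length xs = m - 1" "distinct xs" "set xs \<subseteq> W - {i}" unfolding T_def by auto
    have py: "prod_list (map y xs) = 1" using h by (intro prod_list_ones) (auto simp: y_def)
    have "i \<notin> set xs" using h by auto
    then have cs: "card (set (i # xs)) = m" using h distinct_card[of xs] assms(1) by simp
    have "set (i # xs) \<in> E" using cl[of "set (i # xs)"] cs h assms(5) by auto
    then have "adj_tensor E m (i # xs) = real m / fact m" using adj_edge cs alpha_m by simp
    also have "\<dots> = 1 / fact (m - 1)" using assms(1) fact_reduce[of m] by (simp add: field_simps)
    finally show "adj_tensor E m (i # xs) * prod_list (map y xs) = 1 / fact (m - 1)" using py by simp
  qed
  moreover have "(\<Sum>xs\<in>D - T. adj_tensor E m (i # xs) * prod_list (map y xs)) = (\<Sum>xs\<in>D - T. 2 / fact m)"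
  proof (intro sum.cong refl)
    fix xs assume xs: "xs \<in> D - T"
    then have h: "length xs = m - 1" "distinct xs" "set xs \<subseteq> W" "i \<in> set xs" unfolding T_def D_def by auto
    have py: "prod_list (map y xs) = 1" using h by (intro prod_list_ones) (auto simp: y_def)
    have si: "set (i # xs) = set xs" using h by auto
    have cs: "card (set (i # xs)) = m - 1" using h distinct_card[of xs] si by auto
    have "set (i # xs) \<in> E" using cl[of "set (i # xs)"] cs h si by auto
    then have "adj_tensor E m (i # xs) = real (card (set (i # xs))) / alpha m (card (set (i # xs)))"
      by (rule adj_edge)
    also have "\<dots> = real (m - 1) / (real (m - 1) * fact m / 2)"
      unfolding cs alpha_m1[OF assms(1)] ..
    also have "\<dots> = 2 / fact m" using assms(1) by (simp add: field_simps)
    finally show "adj_tensor E m (i # xs) * prod_list (map y xs) = 2 / fact m" using py by simp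
  qed
  ultimately have B1: "real (Q * (m - 1)) * (2 / fact m) + real ((w + 1 - m) * Q) * (1 / fact (m - 1)) \<le> Bv n E m y i"
    using cT cDT by simp
  have fm: "(fact m :: real) = real m * fact (m - 1)" using assms(1) fact_reduce[of m] by simp
  have r: "real (w + 2 - m) = real (w + 1 - m) + 1" using assms by simp
  have Qb: "real (w + 2 - m) ^ (m - 2) \<le> real Q"
    unfolding Q_def using Q_bound[OF assms(4,1)] by (metis of_nat_le_iff of_nat_power)
  have m2: "2 * (real m - 1) / real m \<ge> 1" using assms(1) by (simp add: field_simps)
  have "real (w + 2 - m) ^ (m - 1) = real (w + 2 - m) ^ (m - 2) * real (w + 2 - m)"
    using assms(1) by (metis Suc_diff_Suc Suc_1 Suc_le_lessD power_Suc2 diff_Suc_1)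
  also have "\<dots> \<le> real Q * (real (w + 1 - m) + 2 * (real m - 1) / real m)"
  proof (rule mult_mono[OF Qb])
    show "real (w + 2 - m) \<le> real (w + 1 - m) + 2 * (real m - 1) / real m" using r m2 by linarith
  qed auto
  also have "\<dots> = (real (Q * (m - 1)) * (2 / fact m) + real ((w + 1 - m) * Q) * (1 / fact (m - 1))) * fact (m - 1)"
    using assms(1) unfolding fm by (simp add: field_simps of_nat_diff)
  finally have "real (w + 2 - m) ^ (m - 1) / fact (m - 1) \<le>
      real (Q * (m - 1)) * (2 / fact m) + real ((w + 1 - m) * Q) * (1 / fact (m - 1))"
    by (simp add: divide_le_eq)
  then show ?thesis using B1 unfolding y_def by linarith
qed


lemma norm_prod_list_le:
  assumes "\<And>j. j \<in> set xs \<Longrightarrow> cmod (x j) \<le> M"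
  shows "cmod (prod_list (map x xs)) \<le> M ^ length xs"
  using assms
proof (induction xs)
  case Nil then show ?case by simp
next
  case (Cons a xs)
  have "0 \<le> M" using Cons.prems[of a] by (meson list.set_intros(1) norm_ge_zero order_trans)
  have "cmod (prod_list (map x (a # xs))) = cmod (x a) * cmod (prod_list (map x xs))"
    by (simp add: norm_mult)
  also have "\<dots> \<le> M * M ^ length xs"
    using Cons \<open>0 \<le> M\<close> by (intro mult_mono) auto
  finally show ?case by simp
qed

lemma eig_bound:
  assumes "tensor_eigenvalue n E m lam"
  shows "cmod lam \<le> (\<Sum>i\<in>{1..n}. \<Sum>xs\<in>tuples n (m - 1). adj_tensor E m (i # xs))"
proof -
  obtain x where x0: "\<exists>i\<in>{1..n}. x i \<noteq> 0" and eq: "\<forall>i\<in>{1..n}.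
     (\<Sum>xs\<in>tuples n (m - 1). of_real (adj_tensor E m (i # xs)) * (\<Prod>j\<leftarrow>xs. x j)) = lam * x i ^ (m - 1)"
    using assms unfolding tensor_eigenvalue_def by blast
  obtain i0 where i0: "i0 \<in> {1..n}" "x i0 \<noteq> 0" using x0 by blast
  define M where "M = Max ((\<lambda>j. cmod (x j)) ` {1..n})"
  have "M \<in> (\<lambda>j. cmod (x j)) ` {1..n}" unfolding M_def using i0 by (intro Max_in) auto
  then obtain i where i: "i \<in> {1..n}" "cmod (x i) = M" by auto
  have le: "cmod (x j) \<le> M" if "j \<in> {1..n}" for j unfolding M_def using that by (intro Max_ge) auto
  have Mpos: "M > 0" using le[OF i0(1)] i0 by (meson norm_le_zero_iff not_le order.strict_trans1)
  have "cmod lam * M ^ (m - 1) = cmod (lam * x i ^ (m - 1))" using i by (simp add: norm_mult norm_power)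
  also have "\<dots> = cmod (\<Sum>xs\<in>tuples n (m - 1). of_real (adj_tensor E m (i # xs)) * (\<Prod>j\<leftarrow>xs. x j))"
    using eq i by simp
  also have "\<dots> \<le> (\<Sum>xs\<in>tuples n (m - 1). cmod (of_real (adj_tensor E m (i # xs)) * (\<Prod>j\<leftarrow>xs. x j)))"
    by (rule norm_sum)
  also have "\<dots> \<le> (\<Sum>xs\<in>tuples n (m - 1). adj_tensor E m (i # xs) * M ^ (m - 1))"
  proof (intro sum_mono)
    fix xs assume "xs \<in> tuples n (m - 1)"
    then have "length xs = m - 1" "set xs \<subseteq> {1..n}" unfolding tuples_def by auto
    moreover have "\<And>j. j \<in> set xs \<Longrightarrow> cmod (x j) \<le> M" using le \<open>set xs \<subseteq> {1..n}\<close> by auto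
    ultimately have "cmod (\<Prod>j\<leftarrow>xs. x j) \<le> M ^ (m - 1)" using norm_prod_list_le[of xs x M] by metis
    then show "cmod (of_real (adj_tensor E m (i # xs)) * (\<Prod>j\<leftarrow>xs. x j)) \<le> adj_tensor E m (i # xs) * M ^ (m - 1)"
      using adj_nonneg[of E m "i # xs"] by (simp add: norm_mult mult_left_mono)
  qed
  also have "\<dots> = (\<Sum>xs\<in>tuples n (m - 1). adj_tensor E m (i # xs)) * M ^ (m - 1)"
    by (simp add: sum_distrib_right)
  finally have "cmod lam \<le> (\<Sum>xs\<in>tuples n (m - 1). adj_tensor E m (i # xs))"
    using Mpos by simp
  also have "\<dots> \<le> (\<Sum>i\<in>{1..n}. \<Sum>xs\<in>tuples n (m - 1). adj_tensor E m (i # xs))"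
    using i by (intro member_le_sum sum_nonneg adj_nonneg) auto
  finally show ?thesis .
qed

lemma of_real_prod_list: "(of_real (prod_list (map f xs)) :: complex) = prod_list (map (\<lambda>j. of_real (f j)) xs)"
  by (induction xs) auto

theorem mainTheorem2:
  fixes n m :: nat and E :: "nat set set"
  assumes "hypergraph n E" and "mm1_graph m E"
  shows "real (clique_number n E m)
           \<le> real m - 2 + (fact (m - 1) * spectral_radius_H n E m) powr (1 / real (m - 1))"
proof -
  have cE: "card ` E = {m, m - 1}" using assms(2) unfolding mm1_graph_def .
  then obtain e where e: "e \<in> E" "card e = m - 1" by (metis imageE insertI1 insert_commute)
  have e1: "e \<noteq> {}" "e \<subseteq> {1..n}" using assms(1) e unfolding hypergraph_def by auto
  then have "finite e" using finite_subset by blast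
  then have "card e \<ge> 1" using e1 by (simp add: Suc_le_eq card_gt_0_iff)
  then have m2: "m \<ge> 2" using e by simp
  have n1: "n \<ge> 1" using e1 by auto
  have Ene: "E \<noteq> {}" using e by auto
  define C where "C = {W. is_clique n E m W}"
  have fC: "finite C" unfolding C_def is_clique_def
    by (rule finite_subset[of _ "Pow {1..n}"]) auto
  have "{} \<in> C" unfolding C_def is_clique_def using m2 by auto
  define w where "w = clique_number n E m"
  have "w = Max (card ` C)" unfolding w_def clique_number_def C_def using Ene by simp
  then have "w \<in> card ` C" using fC \<open>{} \<in> C\<close> by (metis Max_in empty_iff finite_imageI image_is_empty)
  then obtain W where W: "is_clique n E m W" "card W = w" unfolding C_def by auto
  have pnn: "0 \<le> (fact (m - 1) * spectral_radius_H n E m) powr (1 / real (m - 1))" by simp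
  show ?thesis
  proof (cases "w \<le> m - 2")
    case True
    then have "real w \<le> real m - 2" using m2 by linarith
    then show ?thesis using pnn unfolding w_def by linarith
  next
    case False
    then have wm: "w \<ge> m - 1" by simp
    have Wn: "W \<subseteq> {1..n}" using W unfolding is_clique_def by auto
    then have fW: "finite W" using finite_subset by blast
    obtain x \<mu> where xnn: "\<forall>i\<in>{1..n}. x i \<ge> 0" and xne: "\<exists>i\<in>{1..n}. x i \<noteq> 0"
      and xeig: "\<forall>i\<in>{1..n}. Bv n E m x i = \<mu> * x i ^ (m - 1)"
      and hom: "\<forall>y. (\<forall>i\<in>{1..n}. y i \<ge> 0) \<longrightarrow> Fv n E m y \<le> \<mu> * Nv n m y"
      using exists_eig[OF m2 n1, of E] by blast
    define y where "y = (\<lambda>j. if j \<in> W then 1 else (0::real))"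
    define c where "c = real (w + 2 - m) ^ (m - 1) / fact (m - 1)"
    have Ny: "Nv n m y = real w"
    proof -
      have "Nv n m y = (\<Sum>j\<in>{1..n}. if j \<in> W then 1 else 0)"
        unfolding Nv_def y_def using m2 by (intro sum.cong refl) auto
      also have "\<dots> = real (card ({1..n} \<inter> W))" by (simp add: sum.If_cases)
      also have "{1..n} \<inter> W = W" using Wn by auto
      finally show ?thesis using W by simp
    qed
    have Fy: "Fv n E m y = (\<Sum>j\<in>W. Bv n E m y j)"
    proof -
      have "Fv n E m y = (\<Sum>j\<in>{1..n}. y j * Bv n E m y j)" using Fv_Bv m2 by simp
      also have "\<dots> = (\<Sum>j\<in>{1..n}. if j \<in> W then Bv n E m y j else 0)"
        unfolding y_def by (intro sum.cong refl) auto
      also have "\<dots> = (\<Sum>j\<in>{1..n} \<inter> W. Bv n E m y j)" by (simp add: sum.If_cases)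
      also have "{1..n} \<inter> W = W" using Wn by auto
      finally show ?thesis .
    qed
    have "(\<Sum>j\<in>W. c) \<le> (\<Sum>j\<in>W. Bv n E m y j)"
      unfolding c_def y_def using vertex_bound[OF m2 W wm] by (intro sum_mono) auto
    then have "real w * c \<le> Fv n E m y" using Fy W by simp
    also have "\<dots> \<le> \<mu> * Nv n m y" by (rule hom[rule_format]) (simp add: y_def)
    also have "\<dots> = \<mu> * real w" using Ny by simp
    finally have "real w * c \<le> real w * \<mu>" by (simp add: mult.commute)
    moreover have "w > 0" using wm m2 by simp
    ultimately have muc: "c \<le> \<mu>" by simp
    have cnn: "c \<ge> 0" unfolding c_def by simp
    have eigv: "tensor_eigenvalue n E m (complex_of_real \<mu>)"
      unfolding tensor_eigenvalue_def
    proof (intro exI[of _ "\<lambda>j. complex_of_real (x j)"] conjI ballI)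
      show "\<exists>i\<in>{1..n}. complex_of_real (x i) \<noteq> 0" using xne by simp
    next
      fix i assume i: "i \<in> {1..n}"
      have "(\<Sum>xs\<in>tuples n (m - 1). complex_of_real (adj_tensor E m (i # xs)) * (\<Prod>j\<leftarrow>xs. complex_of_real (x j)))
          = complex_of_real (Bv n E m x i)"
        unfolding Bv_def of_real_sum of_real_mult of_real_prod_list ..
      also have "\<dots> = complex_of_real \<mu> * complex_of_real (x i) ^ (m - 1)" using xeig i by simp
      finally show "(\<Sum>xs\<in>tuples n (m - 1). complex_of_real (adj_tensor E m (i # xs)) * (\<Prod>j\<leftarrow>xs. complex_of_real (x j)))
          = complex_of_real \<mu> * complex_of_real (x i) ^ (m - 1)" .
    qed
    have bdd: "bdd_above {cmod lam | lam. tensor_eigenvalue n E m lam}"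
      unfolding bdd_above_def using eig_bound[of n E m] by blast
    have "cmod (complex_of_real \<mu>) \<le> spectral_radius_H n E m"
      unfolding spectral_radius_H_def using eigv by (intro cSup_upper[OF _ bdd]) blast
    then have rho: "c \<le> spectral_radius_H n E m" using muc cnn by simp
    define b where "b = real (w + 2 - m)"
    have bpos: "b > 0" unfolding b_def using wm by simp
    have "b ^ (m - 1) \<le> fact (m - 1) * spectral_radius_H n E m"
      using rho unfolding c_def b_def by (simp add: divide_le_eq mult.commute)
    then have "(b ^ (m - 1)) powr (1 / real (m - 1)) \<le> (fact (m - 1) * spectral_radius_H n E m) powr (1 / real (m - 1))"
      using bpos by (intro powr_mono2) auto
    moreover have "(b ^ (m - 1)) powr (1 / real (m - 1)) = b"
    proof -
      have "(b ^ (m - 1)) = b powr real (m - 1)" using bpos by (simp add: powr_realpow)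
      then have "(b ^ (m - 1)) powr (1 / real (m - 1)) = b powr (real (m - 1) * (1 / real (m - 1)))"
        by (simp add: powr_powr)
      also have "\<dots> = b" using m2 bpos by simp
      finally show ?thesis .
    qed
    moreover have "real w = real m - 2 + b" unfolding b_def using wm m2 by simp
    ultimately show ?thesis unfolding w_def by linarith
  qed
qed

end
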